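(* Let $p$ be a prime and let $m,n,w\in\mathbb{N}$ with $m<p$ and $n=m+pw$. Let $\gamma$ be a partition of $m$ and let $a\in\mathbb{N}$ satisfy $\lfloor\frac{w+1}{2}\rfloor+1\le a\le w$. Set $\lambda=\gamma\star(ap,(w-a)p)$ and $\mu=\gamma\star((a-1)p,(w-a+1)p)$. Then $\chi^\lambda(1)<\chi^\mu(1)$.
   Context: For a partition $\gamma=(\gamma_1,\ldots,\gamma_\ell)$ of $m$ and natural numbers $x,y$, $\gamma\star(x,y)$ denotes the partition $(\gamma_1+x,\gamma_2,\ldots,\gamma_\ell,1^y)$ of $m+x+y$. For a partition $\nu$ of $n$, $\chi^\nu$ denotes the irreducible character of the symmetric group $\mathfrak{S}_n$ labelled by $\nu$. *)

theory Defs
  imports Main "HOL-Computational_Algebra.Primes"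
begin

definition is_partition :: "nat \<Rightarrow> nat list \<Rightarrow> bool" where
  "is_partition m \<gamma> \<longleftrightarrow> sorted_wrt (\<ge>) \<gamma> \<and> (\<forall>k\<in>set \<gamma>. 0 < k) \<and> sum_list \<gamma> = m"

text \<open>gamma star (x,y) = (gamma_1 + x, gamma_2, ..., gamma_l, 1^y); for the empty
  partition gamma_1 is read as 0.\<close>

definition star :: "nat list \<Rightarrow> nat \<Rightarrow> nat \<Rightarrow> nat list" where
  "star \<gamma> x y = (case \<gamma> of [] \<Rightarrow> (if x = 0 then [] else [x]) | g # gs \<Rightarrow> (g + x) # gs) @ replicate y 1"

definition young_diagram :: "nat list \<Rightarrow> (nat \<times> nat) set" where
  "young_diagram la = {(i, j). i < length la \<and> j < la ! i}"

definition is_syt :: "nat list \<Rightarrow> (nat \<times> nat \<Rightarrow> nat) \<Rightarrow> bool" where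
  "is_syt la T \<longleftrightarrow>
     bij_betw T (young_diagram la) {1..sum_list la} \<and>
     (\<forall>i j i' j'. (i, j) \<in> young_diagram la \<and> (i', j') \<in> young_diagram la \<and>
         i \<le> i' \<and> j \<le> j' \<and> (i, j) \<noteq> (i', j') \<longrightarrow> T (i, j) < T (i', j')) \<and>
     (\<forall>c. c \<notin> young_diagram la \<longrightarrow> T c = 0)"

text \<open>The degree chi^lambda(1) of the irreducible character of the symmetric group
  labelled by lambda, i.e. the dimension of the Specht module, which equals the
  number of standard Young tableaux of shape lambda.\<close>

definition char_degree :: "nat list \<Rightarrow> nat" where
  "char_degree la = card {T. is_syt la T}"

end

theory Submission
  imports Defs "HOL.Binomial_Plus" "HOL-Library.FuncSet" "HOL-Library.Product_Lexorder"
begin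


definition rk :: "'a set \<Rightarrow> ('a \<Rightarrow> 'b::linorder) \<Rightarrow> 'a \<Rightarrow> nat" where
  "rk D f c = card {d\<in>D. f d \<le> f c}"

lemma rk_less:
  assumes "finite D" "c \<in> D" "d \<in> D" "f c < f d"
  shows "rk D f c < rk D f d"
proof -
  have "d \<in> {e\<in>D. f e \<le> f d}" "d \<notin> {e\<in>D. f e \<le> f c}" using assms by auto
  moreover have "{e\<in>D. f e \<le> f c} \<subseteq> {e\<in>D. f e \<le> f d}" using assms by auto
  ultimately have "{e\<in>D. f e \<le> f c} \<subset> {e\<in>D. f e \<le> f d}" by blast
  thus ?thesis unfolding rk_def using assms(1) by (intro psubset_card_mono) auto
qed

lemma rk_le_iff:
  assumes "finite D" "c \<in> D" "d \<in> D" "inj_on f D"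
  shows "rk D f c \<le> rk D f d \<longleftrightarrow> f c \<le> f d"
proof
  assume "rk D f c \<le> rk D f d"
  thus "f c \<le> f d" using rk_less[OF assms(1,3,2), of f] by (meson not_le)
next
  assume "f c \<le> f d"
  then have "{e\<in>D. f e \<le> f c} \<subseteq> {e\<in>D. f e \<le> f d}" by auto
  thus "rk D f c \<le> rk D f d" unfolding rk_def using assms(1) by (intro card_mono) auto
qed

lemma rk_less_iff:
  assumes "finite D" "c \<in> D" "d \<in> D" "inj_on f D"
  shows "rk D f c < rk D f d \<longleftrightarrow> f c < f d"
  using rk_le_iff[OF assms(1,3,2,4)] by (meson not_le)

lemma rk_inj:
  assumes "finite D" "inj_on f D"
  shows "inj_on (rk D f) D"
proof (rule inj_onI)
  fix c d assume "c \<in> D" "d \<in> D" "rk D f c = rk D f d"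
  then have "f c = f d" using rk_le_iff[OF assms(1) _ _ assms(2)] by (metis order_antisym order_refl)
  thus "c = d" using assms(2) \<open>c\<in>D\<close> \<open>d\<in>D\<close> by (meson inj_onD)
qed

lemma rk_bij:
  assumes "finite D" "inj_on f D"
  shows "bij_betw (rk D f) D {1..card D}"
proof -
  have sub: "rk D f ` D \<subseteq> {1..card D}"
  proof
    fix k assume "k \<in> rk D f ` D"
    then obtain c where c: "c \<in> D" "k = rk D f c" by auto
    have "c \<in> {d\<in>D. f d \<le> f c}" using c by auto
    then have "1 \<le> card {d\<in>D. f d \<le> f c}" using assms(1)
      by (metis (no_types, lifting) One_nat_def Suc_leI card_gt_0_iff empty_iff finite_subset mem_Collect_eq subsetI)
    moreover have "card {d\<in>D. f d \<le> f c} \<le> card D" using assms(1) by (intro card_mono) auto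
    ultimately show "k \<in> {1..card D}" using c unfolding rk_def by auto
  qed
  have inj: "inj_on (rk D f) D" by (rule rk_inj[OF assms])
  have "card (rk D f ` D) = card {1..card D}" using card_image[OF inj] by simp
  then have "rk D f ` D = {1..card D}" using sub by (intro card_subset_eq) auto
  thus ?thesis using inj unfolding bij_betw_def by simp
qed

lemma rk_of_bij:
  assumes "finite D" "bij_betw f D {1..card D}" "c \<in> D"
  shows "rk D f c = f c"
proof -
  have inj: "inj_on f D" using assms(2) bij_betw_def by blast
  have "f ` {d\<in>D. f d \<le> f c} = {1..f c}"
  proof
    show "f ` {d\<in>D. f d \<le> f c} \<subseteq> {1..f c}" using assms(2) by (auto simp: bij_betw_def)
    show "{1..f c} \<subseteq> f ` {d\<in>D. f d \<le> f c}"
    proof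
      fix k assume k: "k \<in> {1..f c}"
      have "f c \<le> card D" using assms(2,3) by (auto simp: bij_betw_def)
      then have "k \<in> f ` D" using k assms(2) by (auto simp: bij_betw_def)
      thus "k \<in> f ` {d\<in>D. f d \<le> f c}" using k by auto
    qed
  qed
  then have "card {d\<in>D. f d \<le> f c} = card {1..f c}"
    using card_image[of f "{d\<in>D. f d \<le> f c}"] inj by (metis (no_types, lifting) inj_on_subset mem_Collect_eq subsetI)
  thus ?thesis unfolding rk_def by simp
qed

definition kth :: "nat set \<Rightarrow> nat \<Rightarrow> nat" where
  "kth S = inv_into S (rk S id)"

lemma kth_bij: "finite S \<Longrightarrow> bij_betw (kth S) {1..card S} S"
  unfolding kth_def by (rule bij_betw_inv_into) (rule rk_bij, auto)

lemma kth_rk: "finite S \<Longrightarrow> k \<in> {1..card S} \<Longrightarrow> rk S id (kth S k) = k"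
  unfolding kth_def using rk_bij[of S id] by (simp add: bij_betw_def f_inv_into_f)

lemma kth_less:
  assumes "finite S" "k \<in> {1..card S}" "k' \<in> {1..card S}" "k < k'"
  shows "kth S k < kth S k'"
proof -
  have "kth S k \<in> S" "kth S k' \<in> S" using kth_bij[OF assms(1)] assms(2,3) by (auto simp: bij_betw_def)
  thus ?thesis using rk_less_iff[OF assms(1), of "kth S k" "kth S k'" id] kth_rk[OF assms(1)] assms by auto
qed

lemma kth_init:
  assumes "finite S" "S \<subseteq> {1..}" "{1..i} \<subseteq> S" "1 \<le> i"
  shows "kth S i = i"
proof -
  have "i \<in> S" using assms by auto
  have "{s\<in>S. id s \<le> id i} = {1..i}" using assms by auto
  then have "rk S id i = i" unfolding rk_def by simp
  then show ?thesis unfolding kth_def using \<open>i\<in>S\<close> inv_into_f_f[of "rk S id" S i] rk_inj[of S id] assms(1) by simp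
qed

definition le2 :: "nat \<times> nat \<Rightarrow> nat \<times> nat \<Rightarrow> bool" where
  "le2 c d \<longleftrightarrow> fst c \<le> fst d \<and> snd c \<le> snd d"

definition syt_on :: "(nat \<times> nat) set \<Rightarrow> (nat \<times> nat \<Rightarrow> nat) \<Rightarrow> bool" where
  "syt_on E T \<longleftrightarrow> bij_betw T E {1..card E} \<and>
     (\<forall>c\<in>E. \<forall>d\<in>E. le2 c d \<and> c \<noteq> d \<longrightarrow> T c < T d) \<and> (\<forall>c. c \<notin> E \<longrightarrow> T c = 0)"

definition std :: "(nat \<times> nat) set \<Rightarrow> (nat \<times> nat \<Rightarrow> nat) \<Rightarrow> nat \<times> nat \<Rightarrow> nat" where
  "std D T c = (if c \<in> D then rk D T c else 0)"

lemma syt_inj: "syt_on E T \<Longrightarrow> inj_on T E"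
  unfolding syt_on_def bij_betw_def by blast

lemma syt_std:
  assumes "finite E" "D \<subseteq> E" "syt_on E T"
  shows "syt_on D (std D T)"
proof -
  have fD: "finite D" using assms finite_subset by blast
  have inj: "inj_on T D" using syt_inj[OF assms(3)] assms(2) inj_on_subset by blast
  have "bij_betw (rk D T) D {1..card D}" by (rule rk_bij[OF fD inj])
  then have b: "bij_betw (std D T) D {1..card D}"
    by (rule bij_betw_cong[THEN iffD1, rotated]) (simp add: std_def)
  have m: "\<forall>c\<in>D. \<forall>d\<in>D. le2 c d \<and> c \<noteq> d \<longrightarrow> std D T c < std D T d"
  proof (intro ballI impI)
    fix c d assume cd: "c \<in> D" "d \<in> D" "le2 c d \<and> c \<noteq> d"
    then have "T c < T d" using assms(2,3) unfolding syt_on_def by blast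
    thus "std D T c < std D T d" using rk_less[OF fD cd(1,2)] cd by (simp add: std_def)
  qed
  show ?thesis unfolding syt_on_def using b m by (simp add: std_def)
qed

lemma std_trans:
  assumes "finite E" "D \<subseteq> E" "inj_on T E"
  shows "std D (std E T) = std D T"
proof
  fix c
  have fD: "finite D" using assms finite_subset by blast
  have inj: "inj_on T E" using assms(3) .
  show "std D (std E T) c = std D T c"
  proof (cases "c \<in> D")
    case True
    have "{d\<in>D. std E T d \<le> std E T c} = {d\<in>D. T d \<le> T c}"
    proof -
      have "\<And>d. d \<in> D \<Longrightarrow> std E T d \<le> std E T c \<longleftrightarrow> T d \<le> T c"
      proof -
        fix d assume "d \<in> D"
        then have dE: "d \<in> E" and cE: "c \<in> E" using True assms(2) by auto
        have "std E T d = rk E T d" "std E T c = rk E T c" using dE cE by (simp_all add: std_def)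
        thus "std E T d \<le> std E T c \<longleftrightarrow> T d \<le> T c" using rk_le_iff[OF assms(1) dE cE inj] by simp
      qed
      thus ?thesis by blast
    qed
    thus ?thesis using True by (simp add: std_def rk_def)
  qed (simp add: std_def)
qed

lemma std_self:
  assumes "finite E" "syt_on E T"
  shows "std E T = T"
proof
  fix c show "std E T c = T c"
  proof (cases "c \<in> E")
    case True thus ?thesis using assms rk_of_bij[OF assms(1)] unfolding std_def syt_on_def by auto
  next
    case False thus ?thesis using assms(2) unfolding std_def syt_on_def by metis
  qed
qed

lemma mono_bij_unique:
  fixes h :: "'a \<Rightarrow> 'b::linorder" and f g :: "'a \<Rightarrow> nat"
  assumes "finite A" "bij_betw f A B" "bij_betw g A B" "inj_on h A"
    and "\<forall>a\<in>A. \<forall>b\<in>A. h a < h b \<longrightarrow> f a < f b"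
    and "\<forall>a\<in>A. \<forall>b\<in>A. h a < h b \<longrightarrow> g a < g b"
    and "a \<in> A"
  shows "f a = g a"
proof -
  have fB: "finite B" using assms(1,2) bij_betw_finite by blast
  have key: "rk B id (F a) = card {a'\<in>A. h a' \<le> h a}"
    if bF: "bij_betw F A B" and mF: "\<forall>a\<in>A. \<forall>b\<in>A. h a < h b \<longrightarrow> F a < F b" for F :: "'a \<Rightarrow> nat"
  proof -
    have injF: "inj_on F A" using bF bij_betw_def by blast
    have eq: "\<And>a'. a' \<in> A \<Longrightarrow> F a' \<le> F a \<longleftrightarrow> h a' \<le> h a"
    proof -
      fix a' assume a': "a' \<in> A"
      show "F a' \<le> F a \<longleftrightarrow> h a' \<le> h a"
      proof
        assume *: "F a' \<le> F a" show "h a' \<le> h a"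
        proof (rule ccontr)
          assume "\<not> h a' \<le> h a"
          then have "h a < h a'" by simp
          then have "F a < F a'" using mF a' assms(7) by blast
          then show False using * by simp
        qed
      next
        assume "h a' \<le> h a"
        then have "h a' < h a \<or> a' = a" using assms(4) a' assms(7) by (metis inj_onD order_le_less)
        thus "F a' \<le> F a" using mF a' assms(7) by (metis less_imp_le order_refl)
      qed
    qed
    have "{b\<in>B. id b \<le> id (F a)} = F ` {a'\<in>A. F a' \<le> F a}"
      using bF by (auto simp: bij_betw_def)
    then have "rk B id (F a) = card {a'\<in>A. F a' \<le> F a}"
      unfolding rk_def using card_image injF by (metis (no_types, lifting) inj_on_subset mem_Collect_eq subsetI)
    also have "{a'\<in>A. F a' \<le> F a} = {a'\<in>A. h a' \<le> h a}" using eq by auto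
    finally show ?thesis .
  qed
  have "rk B id (f a) = rk B id (g a)" using key[OF assms(2,5)] key[OF assms(3,6)] by simp
  moreover have "f a \<in> B" "g a \<in> B" using assms(2,3,7) by (auto simp: bij_betw_def)
  ultimately show ?thesis using rk_inj[OF fB, of id] inj_onD by fastforce
qed

lemma finite_syt:
  assumes "finite E"
  shows "finite {T. syt_on E T}"
proof -
  let ?n = "card E"
  have "(\<lambda>T. restrict T E) ` {T. syt_on E T} \<subseteq> PiE E (\<lambda>_. {0..?n})"
  proof
    fix R assume "R \<in> (\<lambda>T. restrict T E) ` {T. syt_on E T}"
    then obtain T where T: "syt_on E T" "R = restrict T E" by blast
    have "bij_betw T E {1..?n}" using T(1) unfolding syt_on_def by simp
    then have "\<forall>x\<in>E. T x \<in> {1..?n}" using bij_betwE by blast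
    then have "\<forall>x\<in>E. T x \<in> {0..?n}" by simp
    thus "R \<in> PiE E (\<lambda>_. {0..?n})" using T(2) by (simp add: restrict_PiE_iff)
  qed
  then have fin: "finite ((\<lambda>T. restrict T E) ` {T. syt_on E T})"
    using finite_PiE[OF assms, of "\<lambda>_. {0..?n}"] finite_subset by blast
  have "inj_on (\<lambda>T. restrict T E) {T. syt_on E T}"
  proof (rule inj_onI)
    fix T1 T2 assume a: "T1 \<in> {T. syt_on E T}" "T2 \<in> {T. syt_on E T}" and r: "restrict T1 E = restrict T2 E"
    have z1: "\<forall>c. c \<notin> E \<longrightarrow> T1 c = 0" using a(1) unfolding syt_on_def by simp
    have z2: "\<forall>c. c \<notin> E \<longrightarrow> T2 c = 0" using a(2) unfolding syt_on_def by simp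
    show "T1 = T2"
    proof
      fix c show "T1 c = T2 c"
      proof (cases "c \<in> E")
        case True thus ?thesis using fun_cong[OF r, of c] by simp
      next
        case False thus ?thesis using z1 z2 by metis
      qed
    qed
  qed
  thus ?thesis using fin finite_imageD by blast
qed
lemma syt_bij: "syt_on E T \<Longrightarrow> bij_betw T E {1..card E}"
  unfolding syt_on_def by simp
lemma syt_mono: "syt_on E T \<Longrightarrow> c \<in> E \<Longrightarrow> d \<in> E \<Longrightarrow> le2 c d \<Longrightarrow> c \<noteq> d \<Longrightarrow> T c < T d"
  unfolding syt_on_def by blast
lemma syt_zero: "syt_on E T \<Longrightarrow> c \<notin> E \<Longrightarrow> T c = 0"
  unfolding syt_on_def by metis
lemma syt_intro:
  assumes "bij_betw T E {1..card E}" "\<And>c d. c \<in> E \<Longrightarrow> d \<in> E \<Longrightarrow> le2 c d \<Longrightarrow> c \<noteq> d \<Longrightarrow> T c < T d"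
    "\<And>c. c \<notin> E \<Longrightarrow> T c = 0"
  shows "syt_on E T"
  unfolding syt_on_def using assms by blast
lemma le2_refl: "le2 c c" by (simp add: le2_def)

lemma kth_le_iff:
  assumes "finite S" "k \<in> {1..card S}" "k' \<in> {1..card S}"
  shows "kth S k \<le> kth S k' \<longleftrightarrow> k \<le> k'"
  using kth_less[OF assms(1,2,3)] kth_less[OF assms(1,3,2)] by (cases k k' rule: linorder_cases) auto

lemma chain_fiber:
  fixes D :: "(nat \<times> nat) set" and c :: "nat \<Rightarrow> nat \<times> nat"
  assumes fD: "finite D" and aD: "\<alpha> \<in> D" and injc: "inj_on c {..<x}" and disj: "c ` {..<x} \<inter> D = {}"
    and ch: "\<And>t t'. t < x \<Longrightarrow> t' < x \<Longrightarrow> le2 (c t) (c t') \<longleftrightarrow> t \<le> t'"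
    and att: "\<And>d t. d \<in> D \<Longrightarrow> t < x \<Longrightarrow> le2 d (c t) \<longleftrightarrow> le2 d \<alpha>"
    and top: "\<And>d t. d \<in> D \<Longrightarrow> t < x \<Longrightarrow> \<not> le2 (c t) d"
    and U: "syt_on D U"
  shows "card {T. syt_on (D \<union> c ` {..<x}) T \<and> std D T = U} = (card D + x - U \<alpha>) choose x"
proof -
  define C where "C = c ` {..<x}"
  define E where "E = D \<union> C"
  define n where "n = card D + x"
  define F where "F = {T. syt_on E T \<and> std D T = U}"
  define G where "G = {A. A \<subseteq> {U \<alpha> + 1..n} \<and> card A = x}"
  have fC: "finite C" unfolding C_def by simp
  have cardC: "card C = x" unfolding C_def using card_image[OF injc] by simp
  have fE: "finite E" unfolding E_def using fD fC by simp
  have DC: "D \<inter> C = {}" using disj unfolding C_def by blast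
  have cardE: "card E = n" unfolding E_def n_def using card_Un_disjoint[OF fD fC DC] cardC by simp
  have bijc: "bij_betw c {..<x} C" unfolding C_def using injc by (simp add: bij_betw_imageI)
  have Ub: "bij_betw U D {1..card D}" using syt_bij[OF U] .
  have Uinj: "inj_on U D" using Ub bij_betw_def by blast
  have Ua: "U \<alpha> \<in> {1..card D}" using Ub aD bij_betwE by blast
  have Unot: "\<And>e. e \<notin> D \<Longrightarrow> U e = 0" using syt_zero[OF U] .
  have Fprops: "bij_betw T E {1..n} \<and> (\<forall>d\<in>D. U d = rk D T d) \<and> T ` C \<subseteq> {U \<alpha> + 1..n} \<and> card (T ` C) = x
      \<and> T ` D = {1..n} - T ` C \<and> inj_on T E"
    if "T \<in> F" for T
  proof -
    have sT: "syt_on E T" and sU: "std D T = U" using that unfolding F_def by auto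
    have bT: "bij_betw T E {1..n}" using syt_bij[OF sT] cardE by simp
    have iT: "inj_on T E" using bT bij_betw_def by blast
    have rkU: "\<forall>d\<in>D. U d = rk D T d" using sU unfolding std_def by auto
    have aE: "\<alpha> \<in> E" using aD unfolding E_def by simp
    have "card {d\<in>D. T d \<le> T \<alpha>} \<le> card {1..T \<alpha>}"
    proof (rule card_inj_on_le)
      show "inj_on T {d\<in>D. T d \<le> T \<alpha>}" using iT unfolding E_def by (rule inj_on_subset) auto
      show "T ` {d\<in>D. T d \<le> T \<alpha>} \<subseteq> {1..T \<alpha>}"
      proof
        fix v assume "v \<in> T ` {d\<in>D. T d \<le> T \<alpha>}"
        then obtain d where d: "d \<in> D" "T d \<le> T \<alpha>" "v = T d" by blast
        have "d \<in> E" using d(1) unfolding E_def by simp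
        then have "T d \<in> {1..n}" using bT bij_betwE by blast
        thus "v \<in> {1..T \<alpha>}" using d by simp
      qed
    qed simp
    then have UaT: "U \<alpha> \<le> T \<alpha>" using rkU aD unfolding rk_def by simp
    have sub: "T ` C \<subseteq> {U \<alpha> + 1..n}"
    proof
      fix v assume "v \<in> T ` C"
      then obtain t where t: "t < x" "v = T (c t)" unfolding C_def by blast
      have ctE: "c t \<in> E" using t unfolding E_def C_def by simp
      have "le2 \<alpha> (c t)" using att[OF aD t(1)] le2_refl by simp
      moreover have "\<alpha> \<noteq> c t" using disj aD t(1) by blast
      ultimately have "T \<alpha> < T (c t)" using syt_mono[OF sT aE ctE] by simp
      moreover have "T (c t) \<in> {1..n}" using bT ctE bij_betwE by blast
      ultimately show "v \<in> {U \<alpha> + 1..n}" using t UaT by simp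
    qed
    have cTC: "card (T ` C) = x" using card_image[OF inj_on_subset[OF iT]] cardC unfolding E_def by simp
    have dis: "T ` D \<inter> T ` C = {}"
    proof (rule ccontr)
      assume "T ` D \<inter> T ` C \<noteq> {}"
      then obtain d e where de: "d \<in> D" "e \<in> C" "T d = T e" by blast
      then have "d = e" using iT unfolding E_def by (meson UnI1 UnI2 inj_onD)
      thus False using de DC by blast
    qed
    have "T ` E = {1..n}" using bT by (rule bij_betw_imp_surj_on)
    then have "T ` D \<union> T ` C = {1..n}" unfolding E_def by (simp add: image_Un)
    then have "T ` D = {1..n} - T ` C" using dis by blast
    then show ?thesis using bT rkU sub cTC iT by blast
  qed
  have Fbij: "\<And>T. T \<in> F \<Longrightarrow> bij_betw T E {1..n}" using Fprops[THEN conjunct1] .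
  have FrkU: "\<And>T. T \<in> F \<Longrightarrow> \<forall>d\<in>D. U d = rk D T d" using Fprops[THEN conjunct2, THEN conjunct1] .
  have Fsub: "\<And>T. T \<in> F \<Longrightarrow> T ` C \<subseteq> {U \<alpha> + 1..n}" using Fprops[THEN conjunct2, THEN conjunct2, THEN conjunct1] .
  have Fcard: "\<And>T. T \<in> F \<Longrightarrow> card (T ` C) = x" using Fprops[THEN conjunct2, THEN conjunct2, THEN conjunct2, THEN conjunct1] .
  have FD: "\<And>T. T \<in> F \<Longrightarrow> T ` D = {1..n} - T ` C" using Fprops[THEN conjunct2, THEN conjunct2, THEN conjunct2, THEN conjunct2, THEN conjunct1] .
  have Finj: "\<And>T. T \<in> F \<Longrightarrow> inj_on T E" using Fprops[THEN conjunct2, THEN conjunct2, THEN conjunct2, THEN conjunct2, THEN conjunct2] .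
  have FinjC: "\<And>T. T \<in> F \<Longrightarrow> inj_on T C" using Finj inj_on_subset unfolding E_def by (metis sup_ge2)
  have FinjD: "\<And>T. T \<in> F \<Longrightarrow> inj_on T D" using Finj inj_on_subset unfolding E_def by (metis sup_ge1)
  have sC: "syt_on E T \<Longrightarrow> t < x \<Longrightarrow> t' < x \<Longrightarrow> t < t' \<Longrightarrow> T (c t) < T (c t')" for T t t'
  proof -
    assume a: "syt_on E T" "t < x" "t' < x" "t < t'"
    have "c t \<in> E" "c t' \<in> E" using a unfolding E_def C_def by auto
    moreover have "le2 (c t) (c t')" using ch[OF a(2,3)] a(4) by simp
    moreover have "c t \<noteq> c t'" using injc a(2,3,4) by (metis inj_onD lessThan_iff less_irrefl)
    ultimately show ?thesis using syt_mono[OF a(1)] by blast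
  qed
  have inj: "inj_on (\<lambda>T. T ` C) F"
  proof (rule inj_onI)
    fix T1 T2 assume T1: "T1 \<in> F" and T2: "T2 \<in> F" and eq: "T1 ` C = T2 ` C"
    have s1: "syt_on E T1" and s2: "syt_on E T2" using T1 T2 unfolding F_def by auto
    have onC: "T1 (c t) = T2 (c t)" if t: "t < x" for t
    proof -
      have b1: "bij_betw T1 C (T1 ` C)" using FinjC[OF T1] by (rule inj_on_imp_bij_betw)
      have b2: "bij_betw T2 C (T2 ` C)" using FinjC[OF T2] by (rule inj_on_imp_bij_betw)
      have "(T1 \<circ> c) t = (T2 \<circ> c) t"
      proof (rule mono_bij_unique[where h = id and A = "{..<x}" and B = "T1 ` C" and f = "T1 \<circ> c" and g = "T2 \<circ> c"])
        show "bij_betw (T1 \<circ> c) {..<x} (T1 ` C)" using bij_betw_trans[OF bijc b1] .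
        show "bij_betw (T2 \<circ> c) {..<x} (T1 ` C)" using bij_betw_trans[OF bijc b2] eq by simp
        show "\<forall>a\<in>{..<x}. \<forall>b\<in>{..<x}. id a < id b \<longrightarrow> (T1 \<circ> c) a < (T1 \<circ> c) b" using sC[OF s1] by simp
        show "\<forall>a\<in>{..<x}. \<forall>b\<in>{..<x}. id a < id b \<longrightarrow> (T2 \<circ> c) a < (T2 \<circ> c) b" using sC[OF s2] by simp
      qed (use t in simp_all)
      thus ?thesis by simp
    qed
    have onD: "T1 d = T2 d" if d: "d \<in> D" for d
    proof (rule mono_bij_unique[where h = U and A = D and B = "{1..n} - T1 ` C"])
      have iD1: "inj_on T1 D" and iD2: "inj_on T2 D" using FinjD T1 T2 by blast+
      have "bij_betw T1 D (T1 ` D)" using iD1 by (rule inj_on_imp_bij_betw)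
      then show "bij_betw T1 D ({1..n} - T1 ` C)" using FD[OF T1] by simp
      have "bij_betw T2 D (T2 ` D)" using iD2 by (rule inj_on_imp_bij_betw)
      then show "bij_betw T2 D ({1..n} - T1 ` C)" using FD[OF T2] eq by simp
      show "\<forall>a\<in>D. \<forall>b\<in>D. U a < U b \<longrightarrow> T1 a < T1 b" using FrkU[OF T1] rk_less_iff[OF fD _ _ iD1] by simp
      show "\<forall>a\<in>D. \<forall>b\<in>D. U a < U b \<longrightarrow> T2 a < T2 b" using FrkU[OF T2] rk_less_iff[OF fD _ _ iD2] by simp
    qed (use d fD Uinj in simp_all)
    show "T1 = T2"
    proof
      fix e show "T1 e = T2 e"
      proof (cases "e \<in> D")
        case True thus ?thesis using onD by simp
      next
        case False
        show ?thesis
        proof (cases "e \<in> C")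
          case True
          then obtain t where "t < x" "e = c t" unfolding C_def by blast
          thus ?thesis using onC by simp
        next
          case False
          then have "e \<notin> E" using \<open>e \<notin> D\<close> unfolding E_def by simp
          thus ?thesis using syt_zero[OF s1] syt_zero[OF s2] by simp
        qed
      qed
    qed
  qed
  have img: "(\<lambda>T. T ` C) ` F = G"
  proof
    show "(\<lambda>T. T ` C) ` F \<subseteq> G" using Fsub Fcard unfolding G_def by blast
    show "G \<subseteq> (\<lambda>T. T ` C) ` F"
    proof
      fix A assume "A \<in> G"
      then have AS: "A \<subseteq> {U \<alpha> + 1..n}" and cA: "card A = x" unfolding G_def by auto
      have fA: "finite A" using AS finite_subset by blast
      define R where "R = {1..n} - A"
      have fR: "finite R" unfolding R_def by simp
      have An: "A \<subseteq> {1..n}" using AS by auto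
      have cR: "card R = card D" unfolding R_def using card_Diff_subset[OF fA An] cA n_def by simp
      define T where "T = (\<lambda>e. if e \<in> D then kth R (U e) else if e \<in> C then kth A (Suc (inv_into {..<x} c e)) else 0)"
      have TD: "\<And>e. e \<in> D \<Longrightarrow> T e = kth R (U e)" unfolding T_def by simp
      have TC: "\<And>t. t < x \<Longrightarrow> T (c t) = kth A (Suc t)"
      proof -
        fix t assume t: "t < x"
        have "c t \<notin> D" using disj t by blast
        moreover have "c t \<in> C" using t unfolding C_def by simp
        moreover have "inv_into {..<x} c (c t) = t" using injc t by (simp add: inv_into_f_f)
        ultimately show "T (c t) = kth A (Suc t)" unfolding T_def by simp
      qed
      have T0: "\<And>e. e \<notin> E \<Longrightarrow> T e = 0" unfolding T_def E_def by simp
      have bR: "bij_betw (kth R) {1..card D} R" using kth_bij[OF fR] cR by simp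
      have bTD: "bij_betw T D R"
      proof -
        have "bij_betw (kth R \<circ> U) D R" using bij_betw_trans[OF Ub bR] .
        thus ?thesis by (rule bij_betw_cong[THEN iffD1, rotated]) (simp add: TD)
      qed
      have bA: "bij_betw (kth A) {1..x} A" using kth_bij[OF fA] cA by simp
      have bS: "bij_betw Suc {..<x} {1..x}"
        by (rule bij_betw_byWitness[where f' = "\<lambda>k. k - 1"]) auto
      have bTc: "bij_betw (T \<circ> c) {..<x} A"
      proof -
        have "bij_betw (kth A \<circ> Suc) {..<x} A" using bij_betw_trans[OF bS bA] .
        thus ?thesis by (rule bij_betw_cong[THEN iffD1, rotated]) (simp add: TC)
      qed
      have bTC: "bij_betw T C A" using bij_betw_comp_iff[OF bijc] bTc by blast
      have RA: "R \<inter> A = {}" unfolding R_def by blast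
      have bTE: "bij_betw T E {1..n}"
      proof -
        have "bij_betw T (D \<union> C) (R \<union> A)" by (rule bij_betw_combine[OF bTD bTC RA])
        moreover have "R \<union> A = {1..n}" unfolding R_def using An by blast
        ultimately show ?thesis unfolding E_def by simp
      qed
      have Ua_le: "U \<alpha> \<le> n" using Ua n_def by simp
      have TA: "T \<alpha> = U \<alpha>"
      proof -
        have "kth R (U \<alpha>) = U \<alpha>"
        proof (rule kth_init[OF fR])
          show "R \<subseteq> {1..}" unfolding R_def by auto
          show "{1..U \<alpha>} \<subseteq> R" unfolding R_def using AS Ua_le by auto
          show "1 \<le> U \<alpha>" using Ua by simp
        qed
        thus ?thesis using TD[OF aD] by simp
      qed
      have TDR: "\<And>e. e \<in> D \<Longrightarrow> U e \<in> {1..card R}" using Ub cR bij_betwE by fastforce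
      have sT: "syt_on E T"
      proof (rule syt_intro)
        show "bij_betw T E {1..card E}" using bTE cardE by simp
        show "T e = 0" if "e \<notin> E" for e using T0 that .
        show "T e < T e'" if e: "e \<in> E" "e' \<in> E" "le2 e e'" "e \<noteq> e'" for e e'
        proof (cases "e \<in> D")
          case eD: True
          show ?thesis
          proof (cases "e' \<in> D")
            case True
            have "U e < U e'" using syt_mono[OF U eD True e(3,4)] .
            thus ?thesis using kth_less[OF fR TDR[OF eD] TDR[OF True]] TD eD True by simp
          next
            case False
            then have "e' \<in> C" using e(2) unfolding E_def by simp
            then obtain t where t: "t < x" "e' = c t" unfolding C_def by blast
            have "le2 e \<alpha>" using att[OF eD t(1)] e(3) t(2) by simp
            then have "T e \<le> T \<alpha>"
            proof (cases "e = \<alpha>")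
              case False
              have "U e < U \<alpha>" using syt_mono[OF U eD aD \<open>le2 e \<alpha>\<close> False] .
              thus ?thesis using kth_less[OF fR TDR[OF eD] TDR[OF aD]] TD eD aD by simp
            qed simp
            moreover have "T (c t) \<in> A" using bTc t(1) bij_betwE by fastforce
            ultimately show ?thesis using TA AS t(2) by fastforce
          qed
        next
          case eD: False
          then have "e \<in> C" using e(1) unfolding E_def by simp
          then obtain t where t: "t < x" "e = c t" unfolding C_def by blast
          show ?thesis
          proof (cases "e' \<in> D")
            case True
            then show ?thesis using top[OF True t(1)] e(3) t(2) by simp
          next
            case False
            then have "e' \<in> C" using e(2) unfolding E_def by simp
            then obtain t' where t': "t' < x" "e' = c t'" unfolding C_def by blast
            have "t \<le> t'" using ch[OF t(1) t'(1)] e(3) t(2) t'(2) by simp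
            moreover have "t \<noteq> t'" using e(4) t(2) t'(2) by blast
            ultimately have "t < t'" by simp
            then have "kth A (Suc t) < kth A (Suc t')" using kth_less[OF fA] t(1) t'(1) cA by simp
            thus ?thesis using TC t t' by simp
          qed
        qed
      qed
      have sTU: "std D T = U"
      proof
        fix e show "std D T e = U e"
        proof (cases "e \<in> D")
          case True
          have "{d\<in>D. T d \<le> T e} = {d\<in>D. U d \<le> U e}"
          proof -
            have "\<And>d. d \<in> D \<Longrightarrow> T d \<le> T e \<longleftrightarrow> U d \<le> U e"
              using kth_le_iff[OF fR TDR TDR[OF True]] TD True by simp
            thus ?thesis by blast
          qed
          then have "std D T e = rk D U e" using True unfolding std_def rk_def by simp
          also have "\<dots> = U e" by (rule rk_of_bij[OF fD Ub True])
          finally show ?thesis .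
        next
          case False thus ?thesis using Unot unfolding std_def by simp
        qed
      qed
      have "T ` C = A" using bTC bij_betw_imp_surj_on by blast
      moreover have "T \<in> F" unfolding F_def using sT sTU by simp
      ultimately show "A \<in> (\<lambda>T. T ` C) ` F" by blast
    qed
  qed
  have "card F = card G" using card_image[OF inj] img by simp
  also have "card G = (n - U \<alpha>) choose x"
  proof -
    have "card G = card {U \<alpha> + 1..n} choose x" unfolding G_def by (rule n_subsets) simp
    thus ?thesis by simp
  qed
  finally show ?thesis unfolding F_def E_def C_def n_def .
qed

lemma card_fibers:
  assumes "finite S" "f ` S \<subseteq> Y" "finite Y"
  shows "card S = (\<Sum>y\<in>Y. card {s\<in>S. f s = y})"
proof -
  have "S = (\<Union>y\<in>Y. {s\<in>S. f s = y})" using assms(2) by blast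
  then have "card S = card (\<Union>y\<in>Y. {s\<in>S. f s = y})" by simp
  also have "\<dots> = (\<Sum>y\<in>Y. card {s\<in>S. f s = y})"
    by (rule card_UN_disjoint) (use assms in auto)
  finally show ?thesis .
qed

lemma fiber_decomp:
  assumes fF: "finite F0" and DE: "D \<subseteq> E" and EF: "E \<subseteq> F0"
  shows "card {T. syt_on F0 T \<and> std D T = U}
     = (\<Sum>T''\<in>{T''. syt_on E T'' \<and> std D T'' = U}. card {T. syt_on F0 T \<and> std E T = T''})"
proof -
  let ?S = "{T. syt_on F0 T \<and> std D T = U}"
  let ?Y = "{T''. syt_on E T'' \<and> std D T'' = U}"
  have fE: "finite E" using fF EF finite_subset by blast
  have fS: "finite ?S" using finite_syt[OF fF] by (rule finite_subset[rotated]) auto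
  have fY: "finite ?Y" using finite_syt[OF fE] by (rule finite_subset[rotated]) auto
  have img: "std E ` ?S \<subseteq> ?Y"
  proof
    fix T'' assume "T'' \<in> std E ` ?S"
    then obtain T where T: "syt_on F0 T" "std D T = U" "T'' = std E T" by blast
    have "syt_on E T''" using syt_std[OF fF EF T(1)] T(3) by simp
    moreover have "std D T'' = U"
    proof -
      have "inj_on T E" using syt_inj[OF T(1)] EF inj_on_subset by blast
      then show ?thesis using std_trans[OF fE DE] T(2,3) by simp
    qed
    ultimately show "T'' \<in> ?Y" by simp
  qed
  have "card ?S = (\<Sum>T''\<in>?Y. card {T\<in>?S. std E T = T''})" by (rule card_fibers[OF fS img fY])
  also have "\<dots> = (\<Sum>T''\<in>?Y. card {T. syt_on F0 T \<and> std E T = T''})"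
  proof (rule sum.cong[OF refl])
    fix T'' assume "T'' \<in> ?Y"
    then have U: "std D T'' = U" by simp
    have "{T\<in>?S. std E T = T''} = {T. syt_on F0 T \<and> std E T = T''}"
    proof (intro Collect_cong iffI)
      fix T assume "T \<in> ?S \<and> std E T = T''" thus "syt_on F0 T \<and> std E T = T''" by simp
    next
      fix T assume a: "syt_on F0 T \<and> std E T = T''"
      have "inj_on T E" using syt_inj a EF inj_on_subset by blast
      then have "std D T = std D (std E T)" using std_trans[OF fE DE] by simp
      thus "T \<in> ?S \<and> std E T = T''" using a U by simp
    qed
    thus "card {T\<in>?S. std E T = T''} = card {T. syt_on F0 T \<and> std E T = T''}" by simp
  qed
  finally show ?thesis .
qed

lemma two_chain_ordered:
  fixes D0 :: "(nat \<times> nat) set" and P Q :: "nat \<Rightarrow> nat \<times> nat"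
  assumes fD: "finite D0" and aD: "\<alpha> \<in> D0" and bD: "\<beta> \<in> D0"
    and injP: "inj_on P {..<x}" and injQ: "inj_on Q {..<y}"
    and dP: "P ` {..<x} \<inter> D0 = {}" and dQ: "Q ` {..<y} \<inter> D0 = {}" and dPQ: "P ` {..<x} \<inter> Q ` {..<y} = {}"
    and chP: "\<And>t t'. t < x \<Longrightarrow> t' < x \<Longrightarrow> le2 (P t) (P t') \<longleftrightarrow> t \<le> t'"
    and chQ: "\<And>t t'. t < y \<Longrightarrow> t' < y \<Longrightarrow> le2 (Q t) (Q t') \<longleftrightarrow> t \<le> t'"
    and attP: "\<And>d t. d \<in> D0 \<union> Q ` {..<y} \<Longrightarrow> t < x \<Longrightarrow> le2 d (P t) \<longleftrightarrow> le2 d \<alpha>"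
    and topP: "\<And>d t. d \<in> D0 \<union> Q ` {..<y} \<Longrightarrow> t < x \<Longrightarrow> \<not> le2 (P t) d"
    and attQ: "\<And>d t. d \<in> D0 \<Longrightarrow> t < y \<Longrightarrow> le2 d (Q t) \<longleftrightarrow> le2 d \<beta>"
    and topQ: "\<And>d t. d \<in> D0 \<Longrightarrow> t < y \<Longrightarrow> \<not> le2 (Q t) d"
    and U: "syt_on D0 U" and le: "U \<alpha> \<le> U \<beta>"
  shows "card {T. syt_on (D0 \<union> Q ` {..<y} \<union> P ` {..<x}) T \<and> std D0 T = U}
    = ((card D0 + y - U \<beta>) choose y) * ((card D0 + y + x - U \<alpha>) choose x)"
proof -
  define E where "E = D0 \<union> Q ` {..<y}"
  have fE: "finite E" unfolding E_def using fD by simp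
  have cardE: "card E = card D0 + y" unfolding E_def
    using card_Un_disjoint[OF fD _, of "Q ` {..<y}"] dQ card_image[OF injQ] by (simp add: inf_commute)
  have D0E: "D0 \<subseteq> E" unfolding E_def by simp
  have aE: "\<alpha> \<in> E" using aD D0E by blast
  let ?Y = "{T''. syt_on E T'' \<and> std D0 T'' = U}"
  have "card {T. syt_on (E \<union> P ` {..<x}) T \<and> std D0 T = U}
     = (\<Sum>T''\<in>?Y. card {T. syt_on (E \<union> P ` {..<x}) T \<and> std E T = T''})"
    by (rule fiber_decomp) (use fE D0E in auto)
  also have "\<dots> = (\<Sum>T''\<in>?Y. (card E + x - U \<alpha>) choose x)"
  proof (rule sum.cong[OF refl])
    fix T'' assume "T'' \<in> ?Y"
    then have sT: "syt_on E T''" and sU: "std D0 T'' = U" by auto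
    have iT: "inj_on T'' E" using syt_inj[OF sT] .
    have iT0: "inj_on T'' D0" using iT D0E inj_on_subset by blast
    have rkU: "\<And>d. d \<in> D0 \<Longrightarrow> U d = rk D0 T'' d" using sU unfolding std_def by auto
    have ab: "T'' \<alpha> \<le> T'' \<beta>" using rk_le_iff[OF fD aD bD iT0] le rkU[OF aD] rkU[OF bD] by simp
    have Qbig: "T'' \<beta> < T'' (Q t)" if t: "t < y" for t
    proof -
      have "le2 \<beta> (Q t)" using attQ[OF bD t] le2_refl by simp
      moreover have "\<beta> \<noteq> Q t" using dQ bD t by blast
      moreover have "\<beta> \<in> E" "Q t \<in> E" using bD t unfolding E_def by auto
      ultimately show ?thesis using syt_mono[OF sT] by blast
    qed
    have "{e\<in>E. T'' e \<le> T'' \<alpha>} = {d\<in>D0. T'' d \<le> T'' \<alpha>}"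
    proof (intro set_eqI iffI)
      fix e assume e: "e \<in> {e\<in>E. T'' e \<le> T'' \<alpha>}"
      show "e \<in> {d\<in>D0. T'' d \<le> T'' \<alpha>}"
      proof (cases "e \<in> D0")
        case False
        then obtain t where "t < y" "e = Q t" using e unfolding E_def by blast
        then show ?thesis using Qbig ab e by fastforce
      qed (use e in simp)
    qed (use D0E in auto)
    then have "T'' \<alpha> = U \<alpha>"
      using rk_of_bij[OF fE syt_bij[OF sT] aE] rkU[OF aD] unfolding rk_def by simp
    moreover have "card {T. syt_on (E \<union> P ` {..<x}) T \<and> std E T = T''} = (card E + x - T'' \<alpha>) choose x"
    proof (rule chain_fiber[OF fE aE injP _ chP _ _ sT])
      show "P ` {..<x} \<inter> E = {}" unfolding E_def using dP dPQ by blast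
      show "\<And>d t. d \<in> E \<Longrightarrow> t < x \<Longrightarrow> le2 d (P t) = le2 d \<alpha>" using attP unfolding E_def by blast
      show "\<And>d t. d \<in> E \<Longrightarrow> t < x \<Longrightarrow> \<not> le2 (P t) d" using topP unfolding E_def by blast
    qed
    ultimately show "card {T. syt_on (E \<union> P ` {..<x}) T \<and> std E T = T''} = (card E + x - U \<alpha>) choose x" by simp
  qed
  also have "\<dots> = card ?Y * ((card E + x - U \<alpha>) choose x)" by simp
  also have "card ?Y = (card D0 + y - U \<beta>) choose y"
    unfolding E_def by (rule chain_fiber[OF fD bD injQ dQ chQ attQ topQ U])
  finally show ?thesis unfolding E_def using cardE unfolding E_def by simp
qed

lemma yd_mem: "(i, j) \<in> young_diagram la \<longleftrightarrow> i < length la \<and> j < la ! i"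
  unfolding young_diagram_def by simp

lemma yd_cons: "young_diagram (a # la) = (\<lambda>j. (0, j)) ` {..<a} \<union> (\<lambda>(i, j). (Suc i, j)) ` young_diagram la"
proof (intro set_eqI iffI)
  fix c assume "c \<in> young_diagram (a # la)"
  then obtain i j where c: "c = (i, j)" "i < Suc (length la)" "j < (a # la) ! i" unfolding young_diagram_def by auto
  show "c \<in> (\<lambda>j. (0, j)) ` {..<a} \<union> (\<lambda>(i, j). (Suc i, j)) ` young_diagram la"
  proof (cases i)
    case 0 thus ?thesis using c by auto
  next
    case (Suc i')
    then have "(i', j) \<in> young_diagram la" using c by (simp add: yd_mem)
    thus ?thesis using c Suc by force
  qed
next
  fix c assume "c \<in> (\<lambda>j. (0, j)) ` {..<a} \<union> (\<lambda>(i, j). (Suc i, j)) ` young_diagram la"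
  then show "c \<in> young_diagram (a # la)" by (auto simp: young_diagram_def)
qed

lemma yd_finite_card: "finite (young_diagram la) \<and> card (young_diagram la) = sum_list la"
proof (induction la)
  case Nil thus ?case by (simp add: young_diagram_def)
next
  case (Cons a la)
  let ?A = "(\<lambda>j. (0::nat, j)) ` {..<a}" and ?B = "(\<lambda>(i, j). (Suc i, j)) ` young_diagram la"
  have i1: "inj_on (\<lambda>j. (0::nat, j)) {..<a}" by (auto simp: inj_on_def)
  have i2: "inj_on (\<lambda>(i, j). (Suc i, j)) (young_diagram la)" by (auto simp: inj_on_def)
  have fA: "finite ?A" by simp
  have fB: "finite ?B" using Cons by simp
  have dj: "?A \<inter> ?B = {}" by auto
  have "card (?A \<union> ?B) = a + sum_list la"
    using card_Un_disjoint[OF fA fB dj] card_image[OF i1] card_image[OF i2] Cons by simp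
  thus ?case using fA fB by (simp add: yd_cons)
qed

lemma char_degree_syt: "char_degree la = card {T. syt_on (young_diagram la) T}"
proof -
  have cd: "card (young_diagram la) = sum_list la" using yd_finite_card by blast
  have "is_syt la T \<longleftrightarrow> syt_on (young_diagram la) T" for T
  proof -
    let ?Y = "young_diagram la"
    have M: "(\<forall>i j i' j'. (i, j) \<in> ?Y \<and> (i', j') \<in> ?Y \<and> i \<le> i' \<and> j \<le> j' \<and> (i, j) \<noteq> (i', j') \<longrightarrow> T (i, j) < T (i', j'))
       \<longleftrightarrow> (\<forall>c\<in>?Y. \<forall>d\<in>?Y. le2 c d \<and> c \<noteq> d \<longrightarrow> T c < T d)"
    proof
      assume H: "\<forall>i j i' j'. (i, j) \<in> ?Y \<and> (i', j') \<in> ?Y \<and> i \<le> i' \<and> j \<le> j' \<and> (i, j) \<noteq> (i', j') \<longrightarrow> T (i, j) < T (i', j')"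
      show "\<forall>c\<in>?Y. \<forall>d\<in>?Y. le2 c d \<and> c \<noteq> d \<longrightarrow> T c < T d"
      proof (intro ballI impI)
        fix c d assume "c \<in> ?Y" "d \<in> ?Y" "le2 c d \<and> c \<noteq> d"
        then show "T c < T d" using H[rule_format, of "fst c" "snd c" "fst d" "snd d"] unfolding le2_def by simp
      qed
    next
      assume H: "\<forall>c\<in>?Y. \<forall>d\<in>?Y. le2 c d \<and> c \<noteq> d \<longrightarrow> T c < T d"
      show "\<forall>i j i' j'. (i, j) \<in> ?Y \<and> (i', j') \<in> ?Y \<and> i \<le> i' \<and> j \<le> j' \<and> (i, j) \<noteq> (i', j') \<longrightarrow> T (i, j) < T (i', j')"
      proof (intro allI impI)
        fix i j i' j' assume "(i, j) \<in> ?Y \<and> (i', j') \<in> ?Y \<and> i \<le> i' \<and> j \<le> j' \<and> (i, j) \<noteq> (i', j')"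
        then show "T (i, j) < T (i', j')" using H unfolding le2_def by auto
      qed
    qed
    show ?thesis unfolding is_syt_def syt_on_def cd M by (rule refl)
  qed
  then have "{T. is_syt la T} = {T. syt_on (young_diagram la) T}" by blast
  thus ?thesis unfolding char_degree_def by simp
qed

definition Wf :: "nat \<Rightarrow> nat \<Rightarrow> nat \<Rightarrow> nat \<Rightarrow> nat \<Rightarrow> nat" where
  "Wf m x y i j = (if i \<le> j then ((m + y - j) choose y) * ((m + y + x - i) choose x)
                   else ((m + x - i) choose x) * ((m + x + y - j) choose y))"

lemma star_count:
  assumes part: "is_partition m \<gamma>" and ne: "\<gamma> \<noteq> []"
  shows "char_degree (star \<gamma> x y) = (\<Sum>U\<in>{U. syt_on (young_diagram \<gamma>) U}.
           Wf m x y (U (0, hd \<gamma> - 1)) (U (length \<gamma> - 1, 0)))"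
proof -
  obtain g gs where gg: "\<gamma> = g # gs" using ne by (cases \<gamma>) auto
  define l where "l = length \<gamma>"
  define D0 where "D0 = young_diagram \<gamma>"
  define Arm where "Arm = (\<lambda>t::nat. (0::nat, g + t))"
  define Leg where "Leg = (\<lambda>t::nat. (l + t, 0::nat))"
  define \<alpha> where "\<alpha> = (0::nat, g - 1)"
  define \<beta> where "\<beta> = (l - 1, 0::nat)"
  have sorted: "sorted_wrt (\<ge>) \<gamma>" and pos: "\<forall>k\<in>set \<gamma>. 0 < k" and sm: "sum_list \<gamma> = m"
    using part unfolding is_partition_def by auto
  have l1: "1 \<le> l" unfolding l_def gg by simp
  have g0: "\<gamma> ! 0 = g" unfolding gg by simp
  have g1: "1 \<le> g" using pos gg by auto
  have le_g: "\<gamma> ! i \<le> g" if "i < l" for i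
  proof (cases i)
    case 0 thus ?thesis using g0 by simp
  next
    case (Suc i')
    then show ?thesis using sorted_wrt_nth_less[OF sorted, of 0 i] that g0 unfolding l_def by simp
  qed
  have mD0: "\<And>i j. (i, j) \<in> D0 \<longleftrightarrow> i < l \<and> j < \<gamma> ! i" unfolding D0_def l_def by (rule yd_mem)
  have bnd: "\<And>i j. (i, j) \<in> D0 \<Longrightarrow> i < l \<and> j < g" using mD0 le_g by (meson order_less_le_trans)
  have fD0: "finite D0" and cD0: "card D0 = m" unfolding D0_def using yd_finite_card[of \<gamma>] sm by auto
  have aD: "\<alpha> \<in> D0" unfolding \<alpha>_def using mD0 l1 g0 g1 by simp
  have bD: "\<beta> \<in> D0"
  proof -
    have "\<gamma> ! (l - 1) \<in> set \<gamma>" using l1 unfolding l_def by simp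
    then have "0 < \<gamma> ! (l - 1)" using pos by blast
    thus ?thesis unfolding \<beta>_def using mD0 l1 by simp
  qed
  have hd: "hd \<gamma> - 1 = g - 1" using gg by simp
  have yd: "young_diagram (star \<gamma> x y) = D0 \<union> Arm ` {..<x} \<union> Leg ` {..<y}"
  proof -
    define la where "la = ((g + x) # gs) @ replicate y (1::nat)"
    have st: "star \<gamma> x y = la" unfolding la_def star_def gg by simp
    have len: "length la = l + y" unfolding la_def l_def gg by simp
    have nth: "la ! i = (if i < l then (if i = 0 then g + x else \<gamma> ! i) else 1)" if "i < l + y" for i
    proof (cases "i < l")
      case True
      then show ?thesis unfolding la_def using True by (cases i) (simp_all add: nth_append l_def gg)
    next
      case False
      then show ?thesis unfolding la_def using that by (cases i) (simp_all add: nth_append l_def gg)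
    qed
    have mA: "(i, j) \<in> Arm ` {..<x} \<longleftrightarrow> i = 0 \<and> g \<le> j \<and> j < g + x" for i j
    proof
      assume "(i, j) \<in> Arm ` {..<x}" thus "i = 0 \<and> g \<le> j \<and> j < g + x" unfolding Arm_def by auto
    next
      assume "i = 0 \<and> g \<le> j \<and> j < g + x"
      then have "(i, j) = Arm (j - g)" "j - g < x" unfolding Arm_def by auto
      thus "(i, j) \<in> Arm ` {..<x}" by blast
    qed
    have mL: "(i, j) \<in> Leg ` {..<y} \<longleftrightarrow> l \<le> i \<and> i < l + y \<and> j = 0" for i j
    proof
      assume "(i, j) \<in> Leg ` {..<y}" thus "l \<le> i \<and> i < l + y \<and> j = 0" unfolding Leg_def by auto
    next
      assume "l \<le> i \<and> i < l + y \<and> j = 0"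
      then have "(i, j) = Leg (i - l)" "i - l < y" unfolding Leg_def by auto
      thus "(i, j) \<in> Leg ` {..<y}" by blast
    qed
    show ?thesis
    proof (intro set_eqI)
      fix c :: "nat \<times> nat"
      obtain i j where c: "c = (i, j)" by (cases c)
      have "c \<in> young_diagram la \<longleftrightarrow> i < l + y \<and> j < la ! i" unfolding c yd_mem len ..
      also have "\<dots> \<longleftrightarrow> (i, j) \<in> D0 \<or> (i = 0 \<and> g \<le> j \<and> j < g + x) \<or> (l \<le> i \<and> i < l + y \<and> j = 0)"
      proof (cases "i < l + y")
        case True
        have m0: "(i, j) \<in> D0 \<longleftrightarrow> i < l \<and> j < \<gamma> ! i" by (rule mD0)
        show ?thesis
        proof (cases "i < l")
          case il: True
          show ?thesis
          proof (cases "i = 0")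
            case True
            then have "la ! i = g + x" using nth[of i] il by simp
            then show ?thesis using m0 True il g0 by auto
          next
            case False
            then have "la ! i = \<gamma> ! i" using nth[of i] il by simp
            then show ?thesis using m0 False il by auto
          qed
        next
          case il: False
          then have "la ! i = 1" using nth[of i] True by simp
          then show ?thesis using m0 il l1 True by auto
        qed
      next
        case False
        have "(i, j) \<notin> D0" using bnd[of i j] False by linarith
        then show ?thesis using False l1 by simp
      qed
      finally have R: "c \<in> young_diagram la \<longleftrightarrow> (i, j) \<in> D0 \<or> (i = 0 \<and> g \<le> j \<and> j < g + x) \<or> (l \<le> i \<and> i < l + y \<and> j = 0)" .
      show "c \<in> young_diagram (star \<gamma> x y) \<longleftrightarrow> c \<in> D0 \<union> Arm ` {..<x} \<union> Leg ` {..<y}"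
        unfolding st R unfolding c Un_iff mA mL by (rule iffI) (simp_all only: disj_assoc)
    qed
  qed
  have injA: "inj_on Arm {..<x}" unfolding Arm_def by (auto simp: inj_on_def)
  have injL: "inj_on Leg {..<y}" unfolding Leg_def by (auto simp: inj_on_def)
  have dA: "Arm ` {..<x} \<inter> D0 = {}" unfolding Arm_def using bnd by fastforce
  have dL: "Leg ` {..<y} \<inter> D0 = {}" unfolding Leg_def using bnd by fastforce
  have dAL: "Arm ` {..<x} \<inter> Leg ` {..<y} = {}" unfolding Arm_def Leg_def using g1 by auto
  have dLA: "Leg ` {..<y} \<inter> Arm ` {..<x} = {}" using dAL by blast
  have chA: "\<And>t t'. le2 (Arm t) (Arm t') \<longleftrightarrow> t \<le> t'" unfolding Arm_def le2_def by simp
  have chL: "\<And>t t'. le2 (Leg t) (Leg t') \<longleftrightarrow> t \<le> t'" unfolding Leg_def le2_def by simp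
  have attA0: "\<And>d t. d \<in> D0 \<Longrightarrow> le2 d (Arm t) \<longleftrightarrow> le2 d \<alpha>"
    unfolding Arm_def \<alpha>_def le2_def using bnd by fastforce
  have attL0: "\<And>d t. d \<in> D0 \<Longrightarrow> le2 d (Leg t) \<longleftrightarrow> le2 d \<beta>"
    unfolding Leg_def \<beta>_def le2_def using bnd by fastforce
  have topA0: "\<And>d t. d \<in> D0 \<Longrightarrow> \<not> le2 (Arm t) d" unfolding Arm_def le2_def using bnd by fastforce
  have topL0: "\<And>d t. d \<in> D0 \<Longrightarrow> \<not> le2 (Leg t) d" unfolding Leg_def le2_def using bnd by fastforce
  have LA: "\<And>t t'. \<not> le2 (Leg t) (Arm t')" "\<And>t t'. \<not> le2 (Arm t') (Leg t)"
    unfolding Arm_def Leg_def le2_def using l1 g1 by auto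
  have LA2: "\<And>t. \<not> le2 (Leg t) \<alpha>" "\<And>t. \<not> le2 (Arm t) \<beta>"
    unfolding Arm_def Leg_def le2_def \<alpha>_def \<beta>_def using l1 g1 by auto
  let ?Y = "D0 \<union> Arm ` {..<x} \<union> Leg ` {..<y}"
  have fY: "finite ?Y" using fD0 by simp
  have D0Y: "D0 \<subseteq> ?Y" by blast
  have "char_degree (star \<gamma> x y) = card {T. syt_on ?Y T}" using char_degree_syt yd by simp
  also have "\<dots> = (\<Sum>U\<in>{U. syt_on D0 U}. card {T\<in>{T. syt_on ?Y T}. std D0 T = U})"
    by (rule card_fibers[OF finite_syt[OF fY] _ finite_syt[OF fD0]]) (use syt_std[OF fY D0Y] in blast)
  also have "\<dots> = (\<Sum>U\<in>{U. syt_on D0 U}. Wf m x y (U \<alpha>) (U \<beta>))"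
  proof (rule sum.cong[OF refl])
    fix U assume "U \<in> {U. syt_on D0 U}"
    then have U: "syt_on D0 U" by simp
    have eqS: "{T\<in>{T. syt_on ?Y T}. std D0 T = U} = {T. syt_on ?Y T \<and> std D0 T = U}" by simp
    show "card {T\<in>{T. syt_on ?Y T}. std D0 T = U} = Wf m x y (U \<alpha>) (U \<beta>)"
    proof (cases "U \<alpha> \<le> U \<beta>")
      case True
      have "card {T. syt_on (D0 \<union> Leg ` {..<y} \<union> Arm ` {..<x}) T \<and> std D0 T = U}
          = ((card D0 + y - U \<beta>) choose y) * ((card D0 + y + x - U \<alpha>) choose x)"
      proof (rule two_chain_ordered[OF fD0 aD bD injA injL dA dL dAL _ _ _ _ _ _ U True])
        show "\<And>t t'. le2 (Arm t) (Arm t') = (t \<le> t')" by (rule chA)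
        show "\<And>t t'. le2 (Leg t) (Leg t') = (t \<le> t')" by (rule chL)
        show "\<And>d t. d \<in> D0 \<union> Leg ` {..<y} \<Longrightarrow> t < x \<Longrightarrow> le2 d (Arm t) = le2 d \<alpha>"
          using attA0 LA LA2 by blast
        show "\<And>d t. d \<in> D0 \<union> Leg ` {..<y} \<Longrightarrow> t < x \<Longrightarrow> \<not> le2 (Arm t) d"
          using topA0 LA by blast
        show "\<And>d t. d \<in> D0 \<Longrightarrow> t < y \<Longrightarrow> le2 d (Leg t) = le2 d \<beta>" using attL0 by blast
        show "\<And>d t. d \<in> D0 \<Longrightarrow> t < y \<Longrightarrow> \<not> le2 (Leg t) d" using topL0 by blast
      qed
      moreover have "D0 \<union> Leg ` {..<y} \<union> Arm ` {..<x} = ?Y" by blast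
      ultimately show ?thesis using True cD0 unfolding Wf_def by simp
    next
      case False
      have "card {T. syt_on (D0 \<union> Arm ` {..<x} \<union> Leg ` {..<y}) T \<and> std D0 T = U}
          = ((card D0 + x - U \<alpha>) choose x) * ((card D0 + x + y - U \<beta>) choose y)"
      proof (rule two_chain_ordered[OF fD0 bD aD injL injA dL dA dLA _ _ _ _ _ _ U])
        show "U \<beta> \<le> U \<alpha>" using False by simp
        show "\<And>t t'. le2 (Arm t) (Arm t') = (t \<le> t')" by (rule chA)
        show "\<And>t t'. le2 (Leg t) (Leg t') = (t \<le> t')" by (rule chL)
        show "\<And>d t. d \<in> D0 \<union> Arm ` {..<x} \<Longrightarrow> t < y \<Longrightarrow> le2 d (Leg t) = le2 d \<beta>"
          using attL0 LA LA2 by blast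
        show "\<And>d t. d \<in> D0 \<union> Arm ` {..<x} \<Longrightarrow> t < y \<Longrightarrow> \<not> le2 (Leg t) d"
          using topL0 LA by blast
        show "\<And>d t. d \<in> D0 \<Longrightarrow> t < x \<Longrightarrow> le2 d (Arm t) = le2 d \<alpha>" using attA0 by blast
        show "\<And>d t. d \<in> D0 \<Longrightarrow> t < x \<Longrightarrow> \<not> le2 (Arm t) d" using topA0 by blast
      qed
      then show ?thesis using False cD0 unfolding Wf_def by simp
    qed
  qed
  finally show ?thesis unfolding D0_def \<alpha>_def \<beta>_def l_def hd .
qed



lemma binom_step: "Suc k * (n choose Suc k) = (n - k) * (n choose k)"
  using binomial_absorption[of k n] binomial_absorb_comp[of n k] by simp

lemma binom_lt_sym:
  assumes "k1 < k2" "k1 + k2 < M"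
  shows "M choose k1 < M choose k2"
proof (cases "2 * k2 \<le> M")
  case True thus ?thesis by (intro binomial_strict_mono) (use assms in auto)
next
  case False
  have "M choose k2 = M choose (M - k2)" by (rule binomial_symmetric) (use assms in simp)
  moreover have "M choose k1 < M choose (M - k2)"
    by (intro binomial_strict_mono) (use assms False in auto)
  ultimately show ?thesis by simp
qed

lemma dec_chain:
  fixes f :: "nat \<Rightarrow> nat"
  assumes "\<And>z. lo < z \<Longrightarrow> z \<le> hi \<Longrightarrow> f z < f (z - 1)" "lo < hi"
  shows "f hi < f lo"
  using assms
proof (induction hi)
  case 0 thus ?case by simp
next
  case (Suc h)
  have s: "f (Suc h) < f h" using Suc.prems(1)[of "Suc h"] Suc.prems(2) by simp
  show ?case
  proof (cases "lo = h")
    case True thus ?thesis using s by simp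
  next
    case False
    then have "f h < f lo" using Suc.IH Suc.prems by simp
    thus ?thesis using s by simp
  qed
qed

lemma case_le:
  fixes m x y p i j :: nat
  assumes "1 \<le> i" "i \<le> j" "j \<le> m" "1 \<le> p" "y + p + m \<le> x"
  shows "((m + y - j) choose y) * ((m + y + x - i) choose x)
       < ((m + (y + p) - j) choose (y + p)) * ((m + (y + p) + (x - p) - i) choose (x - p))"
proof -
  define M where "M = m + y + x - i"
  have M2: "m + (y + p) + (x - p) - i = M" unfolding M_def using assms by simp
  have a1: "0 < (m + y - j) choose y" using assms by simp
  have a: "(m + y - j) choose y \<le> (m + (y + p) - j) choose (y + p)"
  proof -
    have e1: "m + y - j - y = m - j" using assms by simp
    have "(m + y - j) choose y = (m + y - j) choose (m + y - j - y)" by (rule binomial_symmetric) (use assms in simp)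
    also have "\<dots> = (m + y - j) choose (m - j)" using e1 by simp
    also have "\<dots> \<le> (m + (y + p) - j) choose (m - j)" by (rule binomial_right_mono) simp
    also have "\<dots> = (m + (y + p) - j) choose (m + (y + p) - j - (m - j))" by (rule binomial_symmetric) (use assms in simp)
    also have "\<dots> = (m + (y + p) - j) choose (y + p)" using assms by simp
    finally show ?thesis .
  qed
  have b: "M choose x < M choose (x - p)"
  proof -
    have "M choose x = M choose (M - x)" by (rule binomial_symmetric) (use assms in \<open>simp add: M_def\<close>)
    also have "\<dots> < M choose (x - p)" by (rule binom_lt_sym) (use assms in \<open>simp_all add: M_def\<close>)
    finally show ?thesis .
  qed
  have "((m + y - j) choose y) * (M choose x) < ((m + y - j) choose y) * (M choose (x - p))"
    using a1 b by simp
  also have "\<dots> \<le> ((m + (y + p) - j) choose (y + p)) * (M choose (x - p))" using a by simp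
  finally show ?thesis unfolding M2 unfolding M_def .
qed

lemma case_gt:
  fixes m x y p i j :: nat
  assumes "1 \<le> j" "j < i" "i \<le> m" "1 \<le> p" "y + 2 * p \<le> x + 1" "p \<le> x"
  shows "((m + x - i) choose x) * ((m + x + y - j) choose y)
       < ((m + (x - p) - i) choose (x - p)) * ((m + (x - p) + (y + p) - j) choose (y + p))"
proof -
  define r where "r = m - i"
  define s where "s = m - j"
  define N where "N = x + y"
  define G where "G = (\<lambda>z. ((r + z) choose z) * ((s + N) choose (N - z)))"
  have sr: "r + 1 \<le> s" unfolding r_def s_def using assms by simp
  have step: "G z < G (z - 1)" if z: "x - p < z" "z \<le> x" for z
  proof -
    have z1: "1 \<le> z" using z by simp
    have zN: "N + 1 \<le> 2 * z" using z assms unfolding N_def by simp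
    define A0 where "A0 = (r + (z - 1)) choose (z - 1)"
    define B0 where "B0 = (s + N) choose (N - z)"
    have A0p: "0 < A0" unfolding A0_def by simp
    have B0p: "0 < B0" unfolding B0_def by simp
    have I1: "z * ((r + z) choose z) = (r + z) * A0"
      using times_binomial_minus1_eq[of z "r + z"] z1 unfolding A0_def
      by (metis Nat.add_diff_assoc One_nat_def add_diff_cancel_left' le_add1 less_le_trans zero_less_one)
    obtain K where K: "K = N - z + 1" by blast
    have I2: "K * ((s + N) choose K) = (s + z) * B0"
    proof -
      have "Suc (N - z) * ((s + N) choose Suc (N - z)) = (s + N - (N - z)) * ((s + N) choose (N - z))"
        by (rule binom_step)
      moreover have "s + N - (N - z) = s + z" using z unfolding N_def by simp
      ultimately show ?thesis unfolding B0_def K by simp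
    qed
    have Gz: "G z = ((r + z) choose z) * B0" unfolding G_def B0_def ..
    have Gz1: "G (z - 1) = A0 * ((s + N) choose K)"
    proof -
      have zle: "z \<le> N" using z unfolding N_def by simp
      have "N - (z - 1) = K" using zle z1 K by simp
      moreover have "r + (z - 1) = r + (z - 1)" ..
      ultimately show ?thesis unfolding G_def A0_def by simp
    qed
    have key: "(r + z) * K < (s + z) * z"
    proof -
      have "(r + z) * K \<le> (r + z) * z" by (rule mult_le_mono2) (use zN K in simp)
      also have "\<dots> < (r + z) * z + z" using z1 by simp
      also have "\<dots> = (r + 1 + z) * z" by (simp add: algebra_simps)
      also have "\<dots> \<le> (s + z) * z" by (rule mult_le_mono1) (use sr in simp)
      finally show ?thesis .
    qed
    have "G z * (z * K) = (r + z) * K * (A0 * B0)"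
      using I1 Gz by (simp add: algebra_simps)
    also have "\<dots> < (s + z) * z * (A0 * B0)" using key A0p B0p by simp
    also have "\<dots> = A0 * z * ((s + z) * B0)" by (simp only: mult_ac)
    also have "\<dots> = A0 * z * (K * ((s + N) choose K))" by (simp only: I2)
    also have "\<dots> = G (z - 1) * (z * K)" by (simp only: Gz1 mult_ac)
    finally show ?thesis by simp
  qed
  have "G x < G (x - p)"
    by (rule dec_chain[where lo = "x - p" and hi = x and f = G, OF step]) (use assms in auto)
  moreover have "G x = ((m + x - i) choose x) * ((m + x + y - j) choose y)"
    unfolding G_def r_def s_def N_def using assms by (simp add: algebra_simps)
  moreover have "G (x - p) = ((m + (x - p) - i) choose (x - p)) * ((m + (x - p) + (y + p) - j) choose (y + p))"
  proof -
    have "N - (x - p) = y + p" unfolding N_def using assms by simp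
    moreover have "m + (x - p) + (y + p) - j = s + N" unfolding s_def N_def using assms by simp
    moreover have "r + (x - p) = m + (x - p) - i" unfolding r_def using assms by simp
    ultimately show ?thesis unfolding G_def by simp
  qed
  ultimately show ?thesis by simp
qed



lemma syt_exists:
  assumes fD: "finite D"
  shows "\<exists>U. syt_on D U"
proof -
  define key where "key = (\<lambda>c::nat \<times> nat. (fst c + snd c, fst c))"
  have ik: "inj_on key D" unfolding key_def inj_on_def by (auto simp: prod_eq_iff)
  define U where "U = (\<lambda>c. if c \<in> D then rk D key c else 0)"
  have "syt_on D U"
  proof (rule syt_intro)
    have "bij_betw (rk D key) D {1..card D}" by (rule rk_bij[OF fD ik])
    thus "bij_betw U D {1..card D}" by (rule bij_betw_cong[THEN iffD1, rotated]) (simp add: U_def)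
    show "U c = 0" if "c \<notin> D" for c using that unfolding U_def by simp
    show "U c < U d" if "c \<in> D" "d \<in> D" "le2 c d" "c \<noteq> d" for c d
    proof -
      have "fst c + snd c < fst d + snd d" using that(3,4) unfolding le2_def by (auto simp: prod_eq_iff)
      then have "key c < key d" unfolding key_def by (simp add: less_prod_def)
      thus ?thesis using rk_less[OF fD that(1,2)] that unfolding U_def by simp
    qed
  qed
  thus ?thesis by blast
qed

lemma corners_in:
  assumes part: "is_partition m \<gamma>" and ne: "\<gamma> \<noteq> []"
  shows "(0, hd \<gamma> - 1) \<in> young_diagram \<gamma>" "(length \<gamma> - 1, 0) \<in> young_diagram \<gamma>"
    "card (young_diagram \<gamma>) = m" "finite (young_diagram \<gamma>)"
proof -
  have pos: "\<forall>k\<in>set \<gamma>. 0 < k" and sm: "sum_list \<gamma> = m" using part unfolding is_partition_def by auto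
  have "hd \<gamma> \<in> set \<gamma>" using ne by simp
  then have "0 < hd \<gamma>" using pos by blast
  moreover have "\<gamma> ! 0 = hd \<gamma>" using ne by (simp add: hd_conv_nth)
  ultimately show "(0, hd \<gamma> - 1) \<in> young_diagram \<gamma>" using ne by (simp add: yd_mem)
  have "\<gamma> ! (length \<gamma> - 1) \<in> set \<gamma>" using ne by simp
  then have "0 < \<gamma> ! (length \<gamma> - 1)" using pos by blast
  then show "(length \<gamma> - 1, 0) \<in> young_diagram \<gamma>" using ne by (simp add: yd_mem)
  show "card (young_diagram \<gamma>) = m" "finite (young_diagram \<gamma>)" using yd_finite_card[of \<gamma>] sm by auto
qed

lemma core:
  assumes part: "is_partition m \<gamma>" and ne: "\<gamma> \<noteq> []" and p1: "1 \<le> p"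
    and c1: "y + p + m \<le> x" and c2: "y + 2 * p \<le> x + 1" and c3: "p \<le> x"
  shows "char_degree (star \<gamma> x y) < char_degree (star \<gamma> (x - p) (y + p))"
proof -
  let ?S = "{U. syt_on (young_diagram \<gamma>) U}"
  let ?a = "(0::nat, hd \<gamma> - 1)" and ?b = "(length \<gamma> - 1, 0::nat)"
  note cs = corners_in[OF part ne]
  have fS: "finite ?S" using finite_syt[OF cs(4)] .
  have neS: "?S \<noteq> {}" using syt_exists[OF cs(4)] by blast
  have "(\<Sum>U\<in>?S. Wf m x y (U ?a) (U ?b)) < (\<Sum>U\<in>?S. Wf m (x - p) (y + p) (U ?a) (U ?b))"
  proof (rule sum_strict_mono[OF fS neS])
    fix U assume "U \<in> ?S"
    then have U: "syt_on (young_diagram \<gamma>) U" by simp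
    have "U ?a \<in> {1..m}" "U ?b \<in> {1..m}" using syt_bij[OF U] cs(1,2,3) bij_betwE by blast+
    then have ia: "1 \<le> U ?a" "U ?a \<le> m" and ib: "1 \<le> U ?b" "U ?b \<le> m" by auto
    show "Wf m x y (U ?a) (U ?b) < Wf m (x - p) (y + p) (U ?a) (U ?b)"
    proof (cases "U ?a \<le> U ?b")
      case True
      have "((m + y - U ?b) choose y) * ((m + y + x - U ?a) choose x)
       < ((m + (y + p) - U ?b) choose (y + p)) * ((m + (y + p) + (x - p) - U ?a) choose (x - p))"
        by (rule case_le) (use ia ib True p1 c1 in auto)
      thus ?thesis using True unfolding Wf_def by simp
    next
      case False
      have "((m + x - U ?a) choose x) * ((m + x + y - U ?b) choose y)
       < ((m + (x - p) - U ?a) choose (x - p)) * ((m + (x - p) + (y + p) - U ?b) choose (y + p))"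
        by (rule case_gt) (use ia ib False p1 c2 c3 in auto)
      thus ?thesis using False unfolding Wf_def by simp
    qed
  qed
  thus ?thesis using star_count[OF part ne, of x y] star_count[OF part ne, of "x - p" "y + p"] by simp
qed

theorem lemma3p3:
  fixes p m n w a :: nat and \<gamma> :: "nat list"
  assumes "prime p"
    and "m < p"
    and "n = m + p * w"
    and "is_partition m \<gamma>"
    and "(w + 1) div 2 + 1 \<le> a"
    and "a \<le> w"
  shows "char_degree (star \<gamma> (a * p) ((w - a) * p))
           < char_degree (star \<gamma> ((a - 1) * p) ((w - a + 1) * p))"
proof -
  define x where "x = a * p"
  define y where "y = (w - a) * p"
  have p2: "2 \<le> p" using assms(1) prime_ge_2_nat by blast
  have a2: "w - a + 2 \<le> a" using assms(5,6) by linarith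
  have a1: "1 \<le> a" using assms(5) by simp
  have xy: "y + 2 * p \<le> x"
  proof -
    have "(w - a + 2) * p \<le> a * p" using a2 by (rule mult_le_mono1)
    thus ?thesis unfolding x_def y_def by (simp add: algebra_simps)
  qed
  have e1: "(a - 1) * p = x - p" unfolding x_def by (simp add: algebra_simps diff_mult_distrib)
  have e2: "(w - a + 1) * p = y + p" unfolding y_def by (simp add: algebra_simps)
  show ?thesis
  proof (cases "\<gamma> = []")
    case False
    have "char_degree (star \<gamma> x y) < char_degree (star \<gamma> (x - p) (y + p))"
      by (rule core[OF assms(4) False]) (use p2 xy assms(2) in auto)
    thus ?thesis unfolding x_def y_def e1[unfolded x_def] e2[unfolded y_def] .
  next
    case True
    then have m0: "m = 0" using assms(4) unfolding is_partition_def by simp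
    have part1: "is_partition 1 [1]" unfolding is_partition_def by simp
    have s1: "star [] x y = star [1] (x - 1) y" using xy p2 unfolding star_def by simp
    have s2: "star [] (x - p) (y + p) = star [1] (x - 1 - p) (y + p)" using xy p2 unfolding star_def by simp
    have "char_degree (star [1] (x - 1) y) < char_degree (star [1] (x - 1 - p) (y + p))"
      by (rule core[OF part1]) (use p2 xy in auto)
    then have "char_degree (star [] x y) < char_degree (star [] (x - p) (y + p))" using s1 s2 by simp
    thus ?thesis unfolding x_def y_def e1[unfolded x_def] e2[unfolded y_def] True .
  qed
qed


end
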